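(* Let $\mathfrak g=\mathfrak k\oplus\mathfrak m$ be a Pauli-spanned Cartan decomposition and let $b_1,b_2,b_3\in\tilde{\mathfrak m}$ be pairwise commuting Pauli strings. If $\tilde{\mathfrak k}^{123}$ is non-empty, then the (Hermitian) Pauli string $b_1b_2b_3$ satisfies $i\,b_1b_2b_3\in\mathfrak m$.
   Context: Pauli strings on $n$ qubits are tensor products of $I,X,Y,Z$, not all identity; two Pauli strings either commute or anticommute. A Pauli-spanned Cartan decomposition is $\mathfrak g=\mathfrak k\oplus\mathfrak m\subseteq\mathfrak{su}(2^n)$ with $\mathfrak k=\mathrm{span}_{i\mathbb R}\tilde{\mathfrak k}$, $\mathfrak m=\mathrm{span}_{i\mathbb R}\tilde{\mathfrak m}$, where $\tilde{\mathfrak k}\sqcup\tilde{\mathfrak m}$ is the set of all Pauli strings (up to phase) $\sigma$ with $i\sigma\in\mathfrak g$, and $[\mathfrak k,\mathfrak k]\subseteq\mathfrak k$, $[\mathfrak m,\mathfrak m]\subseteq\mathfrak k$, $[\mathfrak k,\mathfrak m]\subseteq\mathfrak m$. $\tilde{\mathfrak k}^{123}$ is the set of $k\in\tilde{\mathfrak k}$ anticommuting with each of $b_1,b_2,b_3$. *)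

theory Defs
  imports Complex_Main
begin

text \<open>Matrices are represented as entry functions nat => nat => complex;
  an n-qubit operator is a 2^n x 2^n matrix, all entries outside the index
  range 0..2^n-1 being zero.\<close>

type_synonym cmat = "nat \<Rightarrow> nat \<Rightarrow> complex"

datatype pauli = PI | PX | PY | PZ

definition pmat :: "pauli \<Rightarrow> cmat" where
  "pmat p = (\<lambda>i j. if i < 2 \<and> j < 2 then
      (case p of
         PI \<Rightarrow> (if i = j then 1 else 0)
       | PX \<Rightarrow> (if i \<noteq> j then 1 else 0)
       | PY \<Rightarrow> (if i = 0 \<and> j = 1 then - \<i> else if i = 1 \<and> j = 0 then \<i> else 0)
       | PZ \<Rightarrow> (if i = j then (if i = 0 then 1 else -1) else 0))
    else 0)"

definition kron :: "nat \<Rightarrow> cmat \<Rightarrow> cmat \<Rightarrow> cmat" where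
  "kron m A B = (\<lambda>i j. A (i div m) (j div m) * B (i mod m) (j mod m))"

fun pstr_mat :: "pauli list \<Rightarrow> cmat" where
  "pstr_mat [] = (\<lambda>i j. if i = 0 \<and> j = 0 then 1 else 0)"
| "pstr_mat (p # ps) = kron (2 ^ length ps) (pmat p) (pstr_mat ps)"

definition pauli_string :: "nat \<Rightarrow> pauli list \<Rightarrow> bool" where
  "pauli_string n ps \<longleftrightarrow> length ps = n \<and> (\<exists>p\<in>set ps. p \<noteq> PI)"

definition mmul :: "nat \<Rightarrow> cmat \<Rightarrow> cmat \<Rightarrow> cmat" where
  "mmul n A B = (\<lambda>i j. \<Sum>k<2 ^ n. A i k * B k j)"

definition msmul :: "complex \<Rightarrow> cmat \<Rightarrow> cmat" where
  "msmul c A = (\<lambda>i j. c * A i j)"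

definition mbracket :: "nat \<Rightarrow> cmat \<Rightarrow> cmat \<Rightarrow> cmat" where
  "mbracket n A B = (\<lambda>i j. mmul n A B i j - mmul n B A i j)"

definition rspan :: "cmat set \<Rightarrow> cmat set" where
  "rspan S = {A. \<exists>F c. finite F \<and> F \<subseteq> S \<and>
      (\<forall>i j. A i j = (\<Sum>B\<in>F. complex_of_real (c B) * B i j))}"

definition ispan :: "pauli list set \<Rightarrow> cmat set" where
  "ispan P = rspan ((\<lambda>\<sigma>. msmul \<i> (pstr_mat \<sigma>)) ` P)"

text \<open>Pauli-spanned Cartan decomposition g = k (+) m with k = span_iR K, m = span_iR M,
  K and M disjoint sets of Pauli strings on n qubits.\<close>
definition pauli_cartan :: "nat \<Rightarrow> pauli list set \<Rightarrow> pauli list set \<Rightarrow> bool" where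
  "pauli_cartan n K M \<longleftrightarrow>
     (\<forall>\<sigma>\<in>K \<union> M. pauli_string n \<sigma>) \<and> K \<inter> M = {} \<and>
     (\<forall>A\<in>ispan K. \<forall>B\<in>ispan K. mbracket n A B \<in> ispan K) \<and>
     (\<forall>A\<in>ispan M. \<forall>B\<in>ispan M. mbracket n A B \<in> ispan K) \<and>
     (\<forall>A\<in>ispan K. \<forall>B\<in>ispan M. mbracket n A B \<in> ispan M)"

definition pcommute :: "nat \<Rightarrow> pauli list \<Rightarrow> pauli list \<Rightarrow> bool" where
  "pcommute n a b \<longleftrightarrow> mmul n (pstr_mat a) (pstr_mat b) = mmul n (pstr_mat b) (pstr_mat a)"

definition panticommute :: "nat \<Rightarrow> pauli list \<Rightarrow> pauli list \<Rightarrow> bool" where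
  "panticommute n a b \<longleftrightarrow>
     mmul n (pstr_mat a) (pstr_mat b) = msmul (-1) (mmul n (pstr_mat b) (pstr_mat a))"

definition k123 :: "nat \<Rightarrow> pauli list set \<Rightarrow> pauli list \<Rightarrow> pauli list \<Rightarrow> pauli list \<Rightarrow> pauli list set" where
  "k123 n K b1 b2 b3 = {k\<in>K. panticommute n k b1 \<and> panticommute n k b2 \<and> panticommute n k b3}"

end

theory Submission
  imports Defs
begin

lemma sum2: "(\<Sum>k<2*m. (f k::complex)) = (\<Sum>k<m. f k) + (\<Sum>k<m. f (k+m::nat))"
proof -
  have "(\<Sum>k<2*m. f k) = (\<Sum>k<m+m. f k)" by (simp add: mult_2)
  also have "\<dots> = (\<Sum>k<m. f k) + (\<Sum>k\<in>{m..<m+m}. f k)"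
    by (metis atLeast0LessThan le_add1 sum.atLeastLessThan_concat zero_le)
  also have "(\<Sum>k\<in>{m..<m+m}. f k) = (\<Sum>k<m. f (k+m))"
    using sum.shift_bounds_nat_ivl[of f 0 m m] by (simp add: atLeast0LessThan add.commute)
  finally show ?thesis .
qed

lemma pstr_zero: "i \<ge> 2 ^ length ps \<or> j \<ge> 2 ^ length ps \<Longrightarrow> pstr_mat ps i j = 0"
proof (induction ps arbitrary: i j)
  case Nil then show ?case by auto
next
  case (Cons p ps)
  let ?m = "2 ^ length ps :: nat"
  have m: "?m > 0" by simp
  from Cons.prems have "i div ?m \<ge> 2 \<or> j div ?m \<ge> 2"
    by (auto simp: less_mult_imp_div_less div_le_mono le_div_geq
        intro: div_greater_zero_iff[THEN iffD2] dest: le_div_geq)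
  then show ?case by (auto simp: kron_def pmat_def)
qed

lemma pmat_sq: "(\<Sum>a<2. pmat p x a * pmat p a y) = (if x = y \<and> x < 2 then 1 else 0)"
  by (cases p) (auto simp: pmat_def numeral_2_eq_2 lessThan_Suc)

lemma pstr_sq: "(\<Sum>k<2 ^ length ps. pstr_mat ps i k * pstr_mat ps k j)
   = (if i = j \<and> i < 2 ^ length ps then 1 else 0)"
proof (induction ps arbitrary: i j)
  case Nil then show ?case by auto
next
  case (Cons p ps)
  let ?m = "2 ^ length ps :: nat"
  have m: "?m > 0" by simp
  let ?Q = "pstr_mat ps"
  have "(\<Sum>k<2 ^ length (p#ps). pstr_mat (p#ps) i k * pstr_mat (p#ps) k j)
     = (\<Sum>k<2*?m. pmat p (i div ?m) (k div ?m) * ?Q (i mod ?m) (k mod ?m) *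
          (pmat p (k div ?m) (j div ?m) * ?Q (k mod ?m) (j mod ?m)))"
    by (simp add: kron_def)
  also have "\<dots> = (\<Sum>a<2. pmat p (i div ?m) a * pmat p a (j div ?m)) *
        (\<Sum>b<?m. ?Q (i mod ?m) b * ?Q b (j mod ?m))"
    unfolding sum2 by (simp add: numeral_2_eq_2 lessThan_Suc sum_distrib_left sum.distrib
        algebra_simps flip: sum_distrib_right)
  also have "\<dots> = (if i div ?m = j div ?m \<and> i div ?m < 2 then 1 else 0) * (if i mod ?m = j mod ?m \<and> i mod ?m < ?m then 1 else 0)"
    unfolding pmat_sq Cons.IH by simp
  also have "\<dots> = (if i = j \<and> i < 2 * ?m then 1 else 0)"
  proof -
    have "(i div ?m = j div ?m \<and> i div ?m < 2 \<and> i mod ?m = j mod ?m) \<longleftrightarrow> i = j \<and> i < 2 * ?m"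
      by (metis div_mult_mod_eq less_mult_imp_div_less div_less_iff_less_mult m mult.commute)
    then show ?thesis using m by auto
  qed
  finally show ?case by simp
qed


lemma mmul_assoc: "mmul n (mmul n A B) C = mmul n A (mmul n B C)"
proof (rule ext, rule ext)
  fix i j
  have "(\<Sum>k<2^n. (\<Sum>l<2^n. A i l * B l k) * C k j) = (\<Sum>k<2^n. \<Sum>l<2^n. A i l * B l k * C k j)"
    by (simp add: sum_distrib_right)
  also have "\<dots> = (\<Sum>l<2^n. \<Sum>k<2^n. A i l * B l k * C k j)"
    by (rule sum.swap)
  also have "\<dots> = (\<Sum>l<2^n. A i l * (\<Sum>k<2^n. B l k * C k j))"
    by (simp add: sum_distrib_left mult.assoc)
  finally show "mmul n (mmul n A B) C i j = mmul n A (mmul n B C) i j"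
    unfolding mmul_def .
qed

lemma mmul_smul_l: "mmul n (msmul c A) B = msmul c (mmul n A B)"
  unfolding mmul_def msmul_def by (simp add: sum_distrib_left mult.assoc)

lemma mmul_smul_r: "mmul n A (msmul c B) = msmul c (mmul n A B)"
  unfolding mmul_def msmul_def by (simp add: sum_distrib_left mult.left_commute)

lemma msmul_msmul: "msmul a (msmul b A) = msmul (a * b) A"
  unfolding msmul_def by (simp add: mult.assoc)

lemma ispan_single: "\<sigma> \<in> P \<Longrightarrow> msmul \<i> (pstr_mat \<sigma>) \<in> ispan P"
  unfolding ispan_def rspan_def
  by (rule CollectI, rule exI[of _ "{msmul \<i> (pstr_mat \<sigma>)}"], rule exI[of _ "\<lambda>_. 1"]) auto

lemma ispan_scale: "A \<in> ispan P \<Longrightarrow> msmul (complex_of_real r) A \<in> ispan P"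
proof -
  assume "A \<in> ispan P"
  then obtain F c where F: "finite F" "F \<subseteq> (\<lambda>\<sigma>. msmul \<i> (pstr_mat \<sigma>)) ` P"
    "\<forall>i j. A i j = (\<Sum>B\<in>F. complex_of_real (c B) * B i j)"
    unfolding ispan_def rspan_def by blast
  show ?thesis unfolding ispan_def rspan_def
    apply (rule CollectI, rule exI[of _ F], rule exI[of _ "\<lambda>B. r * c B"])
    using F by (simp add: msmul_def sum_distrib_left mult.assoc)
qed

lemma mmul_pp: assumes "length k = n" and Z: "\<And>i j. i \<ge> 2 ^ n \<Longrightarrow> X i j = 0"
  shows "mmul n (pstr_mat k) (mmul n (pstr_mat k) X) = X"
proof -
  have "mmul n (pstr_mat k) (mmul n (pstr_mat k) X) = mmul n (mmul n (pstr_mat k) (pstr_mat k)) X"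
    by (rule mmul_assoc[symmetric])
  also have "mmul n (pstr_mat k) (pstr_mat k) = (\<lambda>i j. if i = j \<and> i < 2 ^ n then 1 else 0)"
  proof (rule ext, rule ext)
    fix i j
    show "mmul n (pstr_mat k) (pstr_mat k) i j = (if i = j \<and> i < 2 ^ n then 1 else 0)"
      using pstr_sq[of k i j] unfolding mmul_def assms(1) .
  qed
  also have "mmul n \<dots> X = X"
  proof (rule ext, rule ext)
    fix i j
    show "mmul n (\<lambda>i j. if i = j \<and> i < 2 ^ n then 1 else 0) X i j = X i j"
    proof (cases "i < 2 ^ n")
      case True
      have "mmul n (\<lambda>i j. if i = j \<and> i < 2 ^ n then 1 else 0) X i j = (\<Sum>k<2^n. if i = k then X k j else 0)"
        unfolding mmul_def by (rule sum.cong) (auto simp: True)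
      also have "\<dots> = X i j" by (simp only: sum.delta' finite_lessThan lessThan_iff True if_True)
      finally show ?thesis .
    next
      case False
      have "mmul n (\<lambda>i j. if i = j \<and> i < 2 ^ n then 1 else 0) X i j = (\<Sum>k<(2::nat)^n. (0::complex))"
        unfolding mmul_def by (rule sum.cong) (auto simp: False)
      also have "\<dots> = X i j" using Z[of i j] False by simp
      finally show ?thesis .
    qed
  qed
  finally show ?thesis .
qed

lemma neg_swap: "X = msmul (-1) Y \<Longrightarrow> Y = msmul (-1) (X::cmat)"
proof -
  assume "X = msmul (-1) Y"
  then have "msmul (-1) X = msmul (-1) (msmul (-1) Y)" by simp
  also have "\<dots> = Y" unfolding msmul_def by simp
  finally show ?thesis by simp
qed

theorem theoremC2:
  fixes n :: nat and K M :: "pauli list set" and b1 b2 b3 :: "pauli list"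
  assumes "pauli_cartan n K M"
    and "b1 \<in> M" and "b2 \<in> M" and "b3 \<in> M"
    and "pcommute n b1 b2" and "pcommute n b1 b3" and "pcommute n b2 b3"
    and "k123 n K b1 b2 b3 \<noteq> {}"
  shows "msmul \<i> (mmul n (mmul n (pstr_mat b1) (pstr_mat b2)) (pstr_mat b3)) \<in> ispan M"
proof -
  from assms(8) obtain k where kk: "k \<in> k123 n K b1 b2 b3" by (meson ex_in_conv)
  have k: "k \<in> K" "panticommute n k b1" "panticommute n k b2" "panticommute n k b3"
    using kk unfolding k123_def by simp_all
  note C0 = assms(1)[unfolded pauli_cartan_def]
  note C = C0[THEN conjunct1] C0[THEN conjunct2, THEN conjunct2, THEN conjunct1]
    C0[THEN conjunct2, THEN conjunct2, THEN conjunct2, THEN conjunct1]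
    C0[THEN conjunct2, THEN conjunct2, THEN conjunct2, THEN conjunct2]
  have "pauli_string n k" "pauli_string n b1" using C(1) k(1) assms(2) by blast+
  then have lk: "length k = n" "length b1 = n" unfolding pauli_string_def by blast+
  define P where "P = pstr_mat k"
  define B1 where "B1 = pstr_mat b1"
  define B2 where "B2 = pstr_mat b2"
  define B3 where "B3 = pstr_mat b3"
  define m where "m = mmul n"
  note ma = mmul_assoc[of n, folded m_def]
  note ms = mmul_smul_l[of n, folded m_def] mmul_smul_r[of n, folded m_def] msmul_msmul
  have a1: "m B1 P = msmul (-1) (m P B1)" using k(2) unfolding panticommute_def m_def P_def B1_def
    by (rule neg_swap)
  have a2: "m B2 P = msmul (-1) (m P B2)" using k(3) unfolding panticommute_def m_def P_def B2_def
    by (rule neg_swap)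
  have a3: "m B3 P = msmul (-1) (m P B3)" using k(4) unfolding panticommute_def m_def P_def B3_def
    by (rule neg_swap)
  have c12: "m B2 B1 = m B1 B2" using assms(5) unfolding pcommute_def m_def B1_def B2_def by simp
  have c13: "m B3 B1 = m B1 B3" using assms(6) unfolding pcommute_def m_def B1_def B3_def by simp
  have c23: "m B3 B2 = m B2 B3" using assms(7) unfolding pcommute_def m_def B3_def B2_def by simp
  have a1': "m B1 (m P X) = msmul (-1) (m P (m B1 X))" for X
    by (simp add: a1 ms flip: ma)
  have a2': "m B2 (m P X) = msmul (-1) (m P (m B2 X))" for X
    by (simp add: a2 ms flip: ma)
  have a3': "m B3 (m P X) = msmul (-1) (m P (m B3 X))" for X
    by (simp add: a3 ms flip: ma)
  have c12': "m B2 (m B1 X) = m B1 (m B2 X)" for X by (simp add: c12 flip: ma)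
  have c13': "m B3 (m B1 X) = m B1 (m B3 X)" for X by (simp add: c13 flip: ma)
  have c23': "m B3 (m B2 X) = m B2 (m B3 X)" for X by (simp add: c23 flip: ma)
  note R = ma ms a1 a2 a3 c12 c13 c23 a1' a2' a3' c12' c13' c23'
  have br: "mbracket n A B = (\<lambda>i j. m A B i j - m B A i j)" for A B
    unfolding mbracket_def m_def ..
  have iK: "msmul \<i> P \<in> ispan K" unfolding P_def by (rule ispan_single[OF k(1)])
  have i1: "msmul \<i> B1 \<in> ispan M" unfolding B1_def by (rule ispan_single[OF assms(2)])
  have i2: "msmul \<i> B2 \<in> ispan M" unfolding B2_def by (rule ispan_single[OF assms(3)])
  have i3: "msmul \<i> B3 \<in> ispan M" unfolding B3_def by (rule ispan_single[OF assms(4)])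
  have X1: "mbracket n (msmul \<i> P) (msmul \<i> B1) = msmul (-2) (m P B1)"
    unfolding br by (simp add: R) (simp add: msmul_def algebra_simps)
  have X1m: "msmul (-2) (m P B1) \<in> ispan M" using C(4)[rule_format, OF iK i1] unfolding X1 .
  have X2: "mbracket n (msmul (-2) (m P B1)) (msmul \<i> B2) = msmul (-4 * \<i>) (m P (m B1 B2))"
    unfolding br by (simp add: R) (simp add: msmul_def algebra_simps)
  have X2k: "msmul (-4 * \<i>) (m P (m B1 B2)) \<in> ispan K" using C(3)[rule_format, OF X1m i2] unfolding X2 .
  have X3: "mbracket n (msmul (-4 * \<i>) (m P (m B1 B2))) (msmul \<i> B3) = msmul 8 (m P (m B1 (m B2 B3)))"
    unfolding br by (simp add: R) (simp add: msmul_def algebra_simps)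
  have X3m: "msmul 8 (m P (m B1 (m B2 B3))) \<in> ispan M" using C(4)[rule_format, OF X2k i3] unfolding X3 .
  have Z: "m B1 (m B2 B3) i j = 0" if "i \<ge> 2 ^ n" for i j
    using pstr_zero[of b1 i] lk that unfolding m_def mmul_def B1_def by simp
  have PP: "m P (m P (m B1 (m B2 B3))) = m B1 (m B2 B3)"
    unfolding P_def m_def by (rule mmul_pp[OF lk(1)]) (use Z in \<open>simp add: m_def\<close>)
  have X4: "mbracket n (msmul \<i> P) (msmul 8 (m P (m B1 (m B2 B3)))) = msmul (16 * \<i>) (m B1 (m B2 B3))"
    unfolding br by (simp add: R PP) (simp add: msmul_def algebra_simps)
  have X4m: "msmul (16 * \<i>) (m B1 (m B2 B3)) \<in> ispan M" using C(4)[rule_format, OF iK X3m] unfolding X4 .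
  have "msmul \<i> (mmul n (mmul n (pstr_mat b1) (pstr_mat b2)) (pstr_mat b3)) =
     msmul (complex_of_real (1/16)) (msmul (16 * \<i>) (m B1 (m B2 B3)))"
    unfolding B1_def B2_def B3_def m_def by (simp add: mmul_assoc msmul_msmul)
  then show ?thesis using ispan_scale[OF X4m, of "1/16"] by (simp only:)
qed

end
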